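(* Let $n\ge1$, let $f_1,\dots,f_n:\mathbb{R}^d\to\mathbb{R}$ be $L$-smooth (i.e. $\|\nabla f_i(x)-\nabla f_i(y)\|\le L\|x-y\|$ for all $x,y$), $f=\frac1n\sum_i f_i$, $f^\ast:=\inf_x f(x)$ and $\Delta_0:=f(x_0)-f^\ast$. Let $x_0,\dots,x_{T-1}$, $\nabla_0,\dots,\nabla_{T-1}$ and $\gamma_0,\dots,\gamma_{T-1}$ be the iterates, gradient estimators and step-sizes produced by AdaSpider (described in the context) with input $x_0$, $\beta_0>0$, $G_0>0$. Then there is an absolute constant $C>0$ such that \[ \mathbb{E}\Big[\sum_{t=0}^{T-1}\|\nabla_t\|\Big]\le C\Big(\Delta_0\beta_0+G_0+\frac{L}{\beta_0}\log\!\Big(1+nT\Big(\frac{L}{\beta_0G_0}+\frac{\|\nabla f(x_0)\|}{G_0}\Big)\Big)+\beta_0\,\mathbb{E}\Big[\sum_{t=0}^{T-1}\gamma_t\|\nabla f(x_t)-\nabla_t\|^2\Big]\Big)n^{1/4}\sqrt T. \]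
   Context: $\|\cdot\|$ is the Euclidean norm. AdaSpider: input $x_0\in\mathbb{R}^d$, $\beta_0>0$, $G_0>0$, horizon $T\ge1$. For $t=0,1,\dots,T-1$: if $t \bmod n=0$, set $\nabla_t:=\nabla f(x_t)$; otherwise pick $i_t\in\{1,\dots,n\}$ uniformly at random (independently of the past) and set $\nabla_t:=\nabla f_{i_t}(x_t)-\nabla f_{i_t}(x_{t-1})+\nabla_{t-1}$. Then set $\gamma_t:=1\big/\big(n^{1/4}\beta_0\sqrt{n^{1/2}G_0^2+\sum_{s=0}^t\|\nabla_s\|^2}\big)$ and $x_{t+1}:=x_t-\gamma_t\nabla_t$. *)

theory Defs
  imports "HOL-Probability.Probability"
begin

text \<open>Euclidean space R^d, for a dimension d that is quantified inside the statement,
  is represented by functions nat \<Rightarrow> real vanishing outside the coordinates 0..d-1,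
  with the Euclidean inner product and norm over those coordinates.\<close>

definition Rd :: "nat \<Rightarrow> (nat \<Rightarrow> real) set" where
  "Rd d = {x. \<forall>j\<ge>d. x j = 0}"

definition inner_d :: "nat \<Rightarrow> (nat \<Rightarrow> real) \<Rightarrow> (nat \<Rightarrow> real) \<Rightarrow> real" where
  "inner_d d x y = (\<Sum>j<d. x j * y j)"

definition norm_d :: "nat \<Rightarrow> (nat \<Rightarrow> real) \<Rightarrow> real" where
  "norm_d d x = sqrt (inner_d d x x)"

definition vsub :: "(nat \<Rightarrow> real) \<Rightarrow> (nat \<Rightarrow> real) \<Rightarrow> (nat \<Rightarrow> real)" where
  "vsub x y = (\<lambda>j. x j - y j)"

definition vadd :: "(nat \<Rightarrow> real) \<Rightarrow> (nat \<Rightarrow> real) \<Rightarrow> (nat \<Rightarrow> real)" where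
  "vadd x y = (\<lambda>j. x j + y j)"

definition vscale :: "real \<Rightarrow> (nat \<Rightarrow> real) \<Rightarrow> (nat \<Rightarrow> real)" where
  "vscale c x = (\<lambda>j. c * x j)"

definition has_gradient_on_Rd ::
  "nat \<Rightarrow> ((nat \<Rightarrow> real) \<Rightarrow> real) \<Rightarrow> ((nat \<Rightarrow> real) \<Rightarrow> (nat \<Rightarrow> real)) \<Rightarrow> bool" where
  "has_gradient_on_Rd d F G \<longleftrightarrow>
     (\<forall>x\<in>Rd d. G x \<in> Rd d \<and>
        (\<forall>h\<in>Rd d. ((\<lambda>t. F (vadd x (vscale t h))) has_real_derivative inner_d d (G x) h) (at 0)))"

definition avg_fun :: "nat \<Rightarrow> (nat \<Rightarrow> (nat \<Rightarrow> real) \<Rightarrow> real) \<Rightarrow> (nat \<Rightarrow> real) \<Rightarrow> real" where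
  "avg_fun n f x = (\<Sum>i<n. f i x) / real n"

definition full_grad ::
  "nat \<Rightarrow> (nat \<Rightarrow> (nat \<Rightarrow> real) \<Rightarrow> (nat \<Rightarrow> real)) \<Rightarrow> (nat \<Rightarrow> real) \<Rightarrow> (nat \<Rightarrow> real)" where
  "full_grad n g x = (\<lambda>j. (\<Sum>i<n. g i x j) / real n)"

definition ada_step :: "nat \<Rightarrow> real \<Rightarrow> real \<Rightarrow> real \<Rightarrow> real" where
  "ada_step n \<beta>0 G0 S = 1 / (real n powr (1/4) * \<beta>0 * sqrt (sqrt (real n) * G0^2 + S))"

text \<open>State of AdaSpider at time t: (x_t, \<nabla>_t, \<Sum>_{s\<le>t} \<parallel>\<nabla>_s\<parallel>^2), where \<omega> t is the
  sampled index i_t (in 0..n-1) used at time t (ignored when t mod n = 0).\<close>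
fun spider ::
  "nat \<Rightarrow> nat \<Rightarrow> (nat \<Rightarrow> (nat \<Rightarrow> real) \<Rightarrow> (nat \<Rightarrow> real)) \<Rightarrow> (nat \<Rightarrow> real) \<Rightarrow> real \<Rightarrow> real
     \<Rightarrow> (nat \<Rightarrow> nat) \<Rightarrow> nat \<Rightarrow> (nat \<Rightarrow> real) \<times> (nat \<Rightarrow> real) \<times> real" where
  "spider d n g x0 \<beta>0 G0 \<omega> 0 =
     (let v = full_grad n g x0 in (x0, v, (norm_d d v)^2))"
| "spider d n g x0 \<beta>0 G0 \<omega> (Suc t) =
     (let (x, v, S) = spider d n g x0 \<beta>0 G0 \<omega> t;
          x' = vsub x (vscale (ada_step n \<beta>0 G0 S) v);
          v' = (if Suc t mod n = 0 then full_grad n g x'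
                else vadd (vsub (g (\<omega> (Suc t)) x') (g (\<omega> (Suc t)) x)) v)
      in (x', v', S + (norm_d d v')^2))"

definition sp_x where "sp_x d n g x0 \<beta>0 G0 \<omega> t = fst (spider d n g x0 \<beta>0 G0 \<omega> t)"
definition sp_grad where "sp_grad d n g x0 \<beta>0 G0 \<omega> t = fst (snd (spider d n g x0 \<beta>0 G0 \<omega> t))"
definition sp_gamma where
  "sp_gamma d n g x0 \<beta>0 G0 \<omega> t = ada_step n \<beta>0 G0 (snd (snd (spider d n g x0 \<beta>0 G0 \<omega> t)))"

definition idx_pmf :: "nat \<Rightarrow> nat \<Rightarrow> (nat \<Rightarrow> nat) pmf" where
  "idx_pmf n T = pmf_of_set (PiE {..<T} (\<lambda>_. {..<n}))"

end

theory Submission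
  imports Defs
begin


lemma inner_self_nonneg: "0 \<le> inner_d d x x"
  unfolding inner_d_def by (auto intro: sum_nonneg)

lemma norm_sq: "(norm_d d x)^2 = inner_d d x x"
  unfolding norm_d_def using inner_self_nonneg by simp

lemma norm_nonneg: "0 \<le> norm_d d x"
  unfolding norm_d_def using inner_self_nonneg by simp

lemma inner_cs: "inner_d d x y \<le> norm_d d x * norm_d d y"
proof -
  have "(inner_d d x y)^2 \<le> inner_d d x x * inner_d d y y"
    unfolding inner_d_def using Cauchy_Schwarz_ineq_sum[of x y "{..<d}"] by (simp add: power2_eq_square)
  hence "\<bar>inner_d d x y\<bar> \<le> sqrt (inner_d d x x * inner_d d y y)"
    by (metis real_sqrt_abs real_sqrt_le_mono)
  thus ?thesis unfolding norm_d_def by (simp add: real_sqrt_mult)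
qed

lemma norm_scale: "norm_d d (vscale c x) = \<bar>c\<bar> * norm_d d x"
proof -
  have "inner_d d (vscale c x) (vscale c x) = c^2 * inner_d d x x"
    unfolding inner_d_def vscale_def by (simp add: sum_distrib_left algebra_simps power2_eq_square)
  thus ?thesis unfolding norm_d_def by (simp add: real_sqrt_mult)
qed

lemma Rd_vadd: "x \<in> Rd d \<Longrightarrow> y \<in> Rd d \<Longrightarrow> vadd x y \<in> Rd d"
  by (simp add: Rd_def vadd_def)
lemma Rd_vsub: "x \<in> Rd d \<Longrightarrow> y \<in> Rd d \<Longrightarrow> vsub x y \<in> Rd d"
  by (simp add: Rd_def vsub_def)
lemma Rd_vscale: "x \<in> Rd d \<Longrightarrow> vscale c x \<in> Rd d"
  by (simp add: Rd_def vscale_def)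
lemma Rd_full_grad: "(\<And>i. i < n \<Longrightarrow> g i x \<in> Rd d) \<Longrightarrow> full_grad n g x \<in> Rd d"
  by (simp add: Rd_def full_grad_def)

lemma inner_add_right: "inner_d d x (vadd y z) = inner_d d x y + inner_d d x z"
  unfolding inner_d_def vadd_def by (simp add: algebra_simps sum.distrib)
lemma inner_sub_left: "inner_d d (vsub x y) z = inner_d d x z - inner_d d y z"
  unfolding inner_d_def vsub_def by (simp add: algebra_simps sum_subtractf)
lemma inner_scale_right: "inner_d d x (vscale c z) = c * inner_d d x z"
  unfolding inner_d_def vscale_def by (simp add: algebra_simps sum_distrib_left)

lemma one_fun_descent:
  assumes gr: "has_gradient_on_Rd d F G"
    and lip: "\<forall>x\<in>Rd d. \<forall>y\<in>Rd d. norm_d d (vsub (G x) (G y)) \<le> L * norm_d d (vsub x y)"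
    and L: "0 \<le> L" and x: "x \<in> Rd d" and h: "h \<in> Rd d"
  shows "F (vadd x h) \<le> F x + inner_d d (G x) h + L * (norm_d d h)^2"
proof -
  define \<phi> where "\<phi> s = F (vadd x (vscale s h))" for s
  have der: "DERIV \<phi> s :> inner_d d (G (vadd x (vscale s h))) h" for s
  proof -
    let ?y = "vadd x (vscale s h)"
    have y: "?y \<in> Rd d" using x h by (simp add: Rd_vadd Rd_vscale)
    have "((\<lambda>t. F (vadd ?y (vscale t h))) has_real_derivative inner_d d (G ?y) h) (at 0)"
      using gr y h unfolding has_gradient_on_Rd_def by blast
    moreover have "(\<lambda>t. F (vadd ?y (vscale t h))) = (\<lambda>t. \<phi> (t + s))"
      by (rule ext) (simp add: \<phi>_def vadd_def vscale_def algebra_simps)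
    ultimately have "((\<lambda>t. \<phi> (t + s)) has_real_derivative inner_d d (G ?y) h) (at 0)" by simp
    thus ?thesis using DERIV_shift[of \<phi> _ 0 s] by simp
  qed
  obtain z where z: "0 < z" "z < 1" "\<phi> 1 - \<phi> 0 = (1 - 0) * inner_d d (G (vadd x (vscale z h))) h"
    using MVT2[of 0 1 \<phi>, OF _ der] by auto
  let ?y = "vadd x (vscale z h)"
  have y: "?y \<in> Rd d" using x h by (simp add: Rd_vadd Rd_vscale)
  have "inner_d d (G ?y) h = inner_d d (G x) h + inner_d d (vsub (G ?y) (G x)) h"
    by (simp add: inner_sub_left)
  also have "inner_d d (vsub (G ?y) (G x)) h \<le> norm_d d (vsub (G ?y) (G x)) * norm_d d h"
    by (rule inner_cs)
  also have "norm_d d (vsub (G ?y) (G x)) \<le> L * norm_d d (vsub ?y x)"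
    using lip x y by blast
  also have "vsub ?y x = vscale z h" by (rule ext) (simp add: vsub_def vadd_def vscale_def)
  also have "norm_d d (vscale z h) = z * norm_d d h" using z by (simp add: norm_scale)
  finally have "inner_d d (G ?y) h \<le> inner_d d (G x) h + L * (z * norm_d d h) * norm_d d h"
    using norm_nonneg[of d h] by (simp add: mult_right_mono)
  also have "L * (z * norm_d d h) * norm_d d h \<le> L * (norm_d d h)^2"
  proof -
    have "0 \<le> L * norm_d d h * norm_d d h" using L norm_nonneg[of d h] by simp
    hence "(L * norm_d d h * norm_d d h) * z \<le> (L * norm_d d h * norm_d d h) * 1"
      using z by (intro mult_left_mono) auto
    thus ?thesis by (simp add: power2_eq_square algebra_simps)
  qed
  finally show ?thesis using z
    by (simp add: \<phi>_def vscale_def vadd_def)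
qed
lemma inner_full_grad: "inner_d d (full_grad n g x) h = (\<Sum>i<n. inner_d d (g i x) h) / real n"
  unfolding inner_d_def full_grad_def
  by (simp add: sum_divide_distrib[symmetric] sum_distrib_right sum_distrib_left sum.swap[of _ "{..<d}"] algebra_simps)

lemma avg_descent:
  assumes n: "n \<ge> 1" and gr: "\<forall>i<n. has_gradient_on_Rd d (f i) (g i)"
    and lip: "\<forall>i<n. \<forall>x\<in>Rd d. \<forall>y\<in>Rd d. norm_d d (vsub (g i x) (g i y)) \<le> L * norm_d d (vsub x y)"
    and L: "0 \<le> L" and x: "x \<in> Rd d" and h: "h \<in> Rd d"
  shows "avg_fun n f (vadd x h) \<le> avg_fun n f x + inner_d d (full_grad n g x) h + L * (norm_d d h)^2"
proof -
  have "(\<Sum>i<n. f i (vadd x h)) \<le> (\<Sum>i<n. f i x + inner_d d (g i x) h + L * (norm_d d h)^2)"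
    apply (rule sum_mono)
    using one_fun_descent[OF _ _ L x h] gr lip by simp
  also have "\<dots> = (\<Sum>i<n. f i x) + (\<Sum>i<n. inner_d d (g i x) h) + real n * (L * (norm_d d h)^2)"
    by (simp add: sum.distrib)
  finally have "(\<Sum>i<n. f i (vadd x h)) / real n \<le> ((\<Sum>i<n. f i x) + (\<Sum>i<n. inner_d d (g i x) h) + real n * (L * (norm_d d h)^2)) / real n"
    using n by (simp add: divide_right_mono)
  also have "\<dots> = avg_fun n f x + inner_d d (full_grad n g x) h + L * (norm_d d h)^2"
    using n by (simp add: avg_fun_def inner_full_grad add_divide_distrib)
  finally show ?thesis by (simp add: avg_fun_def)
qed

lemma inner_lower: "inner_d d p v \<ge> (norm_d d v)^2 / 2 - (norm_d d (vsub p v))^2 / 2"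
proof -
  have "(\<Sum>j<d. v j * v j / 2 - (p j - v j) * (p j - v j) / 2) \<le> (\<Sum>j<d. p j * v j)"
  proof (rule sum_mono)
    fix j
    have "p j * v j - (v j * v j / 2 - (p j - v j) * (p j - v j) / 2) = (p j)^2 / 2"
      by (simp add: field_simps power2_eq_square)
    moreover have "0 \<le> (p j)^2 / 2" by simp
    ultimately show "v j * v j / 2 - (p j - v j) * (p j - v j) / 2 \<le> p j * v j"
      by linarith
  qed
  thus ?thesis unfolding norm_sq unfolding inner_d_def vsub_def
    by (simp add: sum_subtractf sum_divide_distrib)
qed

lemma step_descent:
  assumes n: "n \<ge> 1" and gr: "\<forall>i<n. has_gradient_on_Rd d (f i) (g i)"
    and lip: "\<forall>i<n. \<forall>x\<in>Rd d. \<forall>y\<in>Rd d. norm_d d (vsub (g i x) (g i y)) \<le> L * norm_d d (vsub x y)"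
    and L: "0 \<le> L" and x: "x \<in> Rd d" and v: "v \<in> Rd d" and \<gamma>: "0 \<le> \<gamma>"
  shows "avg_fun n f (vsub x (vscale \<gamma> v)) \<le> avg_fun n f x - \<gamma> / 2 * (norm_d d v)^2
     + \<gamma> / 2 * (norm_d d (vsub (full_grad n g x) v))^2 + L * \<gamma>^2 * (norm_d d v)^2"
proof -
  have e: "vsub x (vscale \<gamma> v) = vadd x (vscale (-\<gamma>) v)"
    by (rule ext) (simp add: vsub_def vadd_def vscale_def)
  have "avg_fun n f (vsub x (vscale \<gamma> v)) \<le> avg_fun n f x + inner_d d (full_grad n g x) (vscale (-\<gamma>) v)
      + L * (norm_d d (vscale (-\<gamma>) v))^2"
    unfolding e by (rule avg_descent[OF n gr lip L x Rd_vscale[OF v]])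
  also have "inner_d d (full_grad n g x) (vscale (-\<gamma>) v) = - \<gamma> * inner_d d (full_grad n g x) v"
    by (simp add: inner_scale_right)
  also have "(norm_d d (vscale (-\<gamma>) v))^2 = \<gamma>^2 * (norm_d d v)^2"
    by (simp add: norm_scale power_mult_distrib)
  finally have 1: "avg_fun n f (vsub x (vscale \<gamma> v)) \<le> avg_fun n f x - \<gamma> * inner_d d (full_grad n g x) v + L * (\<gamma>^2 * (norm_d d v)^2)"
    by simp
  have "\<gamma> * ((norm_d d v)^2 / 2 - (norm_d d (vsub (full_grad n g x) v))^2 / 2) \<le> \<gamma> * inner_d d (full_grad n g x) v"
    using \<gamma> inner_lower by (rule mult_left_mono[rotated])
  with 1 show ?thesis by (simp add: algebra_simps)
qed


definition sp_S where "sp_S d n g x0 \<beta>0 G0 \<omega> t = snd (snd (spider d n g x0 \<beta>0 G0 \<omega> t))"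

lemma sp_0: "sp_x d n g x0 \<beta>0 G0 \<omega> 0 = x0" "sp_grad d n g x0 \<beta>0 G0 \<omega> 0 = full_grad n g x0"
  "sp_S d n g x0 \<beta>0 G0 \<omega> 0 = (norm_d d (full_grad n g x0))^2"
  by (simp_all add: sp_x_def sp_grad_def sp_S_def Let_def)

lemma sp_Suc:
  "sp_x d n g x0 \<beta>0 G0 \<omega> (Suc t) = vsub (sp_x d n g x0 \<beta>0 G0 \<omega> t)
      (vscale (sp_gamma d n g x0 \<beta>0 G0 \<omega> t) (sp_grad d n g x0 \<beta>0 G0 \<omega> t))"
  "sp_grad d n g x0 \<beta>0 G0 \<omega> (Suc t) = (if Suc t mod n = 0 then full_grad n g (sp_x d n g x0 \<beta>0 G0 \<omega> (Suc t))
      else vadd (vsub (g (\<omega> (Suc t)) (sp_x d n g x0 \<beta>0 G0 \<omega> (Suc t))) (g (\<omega> (Suc t)) (sp_x d n g x0 \<beta>0 G0 \<omega> t)))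
        (sp_grad d n g x0 \<beta>0 G0 \<omega> t))"
  "sp_S d n g x0 \<beta>0 G0 \<omega> (Suc t) = sp_S d n g x0 \<beta>0 G0 \<omega> t + (norm_d d (sp_grad d n g x0 \<beta>0 G0 \<omega> (Suc t)))^2"
  by (simp_all add: sp_x_def sp_grad_def sp_S_def sp_gamma_def Let_def case_prod_beta)

lemma sp_gamma_S: "sp_gamma d n g x0 \<beta>0 G0 \<omega> t = ada_step n \<beta>0 G0 (sp_S d n g x0 \<beta>0 G0 \<omega> t)"
  by (simp add: sp_gamma_def sp_S_def)

lemma sp_S_sum: "sp_S d n g x0 \<beta>0 G0 \<omega> t = (\<Sum>s<Suc t. (norm_d d (sp_grad d n g x0 \<beta>0 G0 \<omega> s))^2)"
  by (induction t) (simp_all add: sp_0 sp_Suc)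

lemma sp_Rd:
  assumes x0: "x0 \<in> Rd d" and gr: "\<forall>i<n. has_gradient_on_Rd d (f i) (g i)"
  shows "(\<And>s. s \<le> t \<Longrightarrow> \<omega> s < n) \<Longrightarrow> sp_x d n g x0 \<beta>0 G0 \<omega> t \<in> Rd d \<and> sp_grad d n g x0 \<beta>0 G0 \<omega> t \<in> Rd d"
proof (induction t)
  have gR: "\<And>i x. i < n \<Longrightarrow> x \<in> Rd d \<Longrightarrow> g i x \<in> Rd d"
    using gr unfolding has_gradient_on_Rd_def by blast
  {
  case 0
  show ?case using x0 gR by (simp add: sp_0 Rd_full_grad)
  next
  case (Suc t)
  then have IH: "sp_x d n g x0 \<beta>0 G0 \<omega> t \<in> Rd d \<and> sp_grad d n g x0 \<beta>0 G0 \<omega> t \<in> Rd d" by simp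
  have X: "sp_x d n g x0 \<beta>0 G0 \<omega> (Suc t) \<in> Rd d"
    using IH by (simp add: sp_Suc(1) Rd_vsub Rd_vscale)
  have "\<omega> (Suc t) < n" using Suc.prems by simp
  then show ?case using X IH gR
    by (simp add: sp_Suc(2)[of d n g x0 \<beta>0 G0 \<omega> t] Rd_full_grad Rd_vadd Rd_vsub del: sp_Suc(1))
  }
qed



lemma log_sum:
  fixes a :: "nat \<Rightarrow> real"
  assumes a: "\<And>t. 0 \<le> a t" and c: "0 < c"
  shows "(\<Sum>t<T. a t / (c + (\<Sum>s<Suc t. a s))) \<le> ln ((c + (\<Sum>s<T. a s)) / c)"
proof (induction T)
  case 0 then show ?case using c by simp
next
  case (Suc T)
  define y where "y = c + (\<Sum>s<T. a s)"
  have y: "0 < y" unfolding y_def using c a by (simp add: add_pos_nonneg sum_nonneg)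
  define z where "z = y + a T"
  have z: "0 < z" "y \<le> z" using y a unfolding z_def by (auto intro: add_pos_nonneg)
  have "a T / z = 1 - y / z" using z by (simp add: z_def field_simps)
  also have "\<dots> \<le> - ln (y / z)" using ln_le_minus_one[of "y/z"] y z by simp
  also have "\<dots> = ln z - ln y" using y z by (simp add: ln_div)
  finally have 1: "a T / z \<le> ln z - ln y" .
  have "ln (y / c) = ln y - ln c" "ln (z / c) = ln z - ln c" using y z c by (simp_all add: ln_div)
  then show ?case using Suc.IH 1 by (simp add: y_def z_def add.assoc)
qed

lemma sum_le_sqrt:
  fixes b :: "nat \<Rightarrow> real"
  shows "(\<Sum>t<T. b t) \<le> sqrt (real T) * sqrt (\<Sum>t<T. (b t)^2)"
proof -
  have "(\<Sum>t<T. b t)^2 \<le> (\<Sum>t<T. (b t)^2) * real T"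
    using sum_squared_le_sum_of_squares[of b "{..<T}"] by simp
  hence "\<bar>\<Sum>t<T. b t\<bar> \<le> sqrt ((\<Sum>t<T. (b t)^2) * real T)"
    by (metis real_sqrt_abs real_sqrt_le_mono)
  thus ?thesis by (simp add: real_sqrt_mult mult.commute)
qed

lemma ln_half: "1/2 \<le> ln (2::real)"
  using ln_le_minus_one[of "1/2"] by (simp add: ln_div)

lemma ln8: "ln (8::real) \<le> 7"
  using ln_le_minus_one[of 8] by simp

lemma final_real:
  fixes r \<beta> G0 L \<Delta> E Q :: real
  assumes r: "1 \<le> r" and \<beta>: "0 < \<beta>" and G: "0 < G0" and L: "0 \<le> L" and \<Delta>: "0 \<le> \<Delta>" and E: "0 \<le> E"
    and Q: "(r * G0)^2 \<le> Q"
    and hyp: "(Q - (r * G0)^2) / (2 * r * \<beta> * sqrt Q) \<le> \<Delta> + E / 2 + L / (r^2 * \<beta>^2) * ln (Q / (r * G0)^2)"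
  shows "sqrt Q \<le> 120 * r * (\<Delta> * \<beta> + G0 + L / \<beta> * ln (1 + L / (\<beta> * G0)) + \<beta> * E)"
proof -
  define A where "A = sqrt Q"
  define B where "B = r * G0"
  have B: "0 < B" using r G by (simp add: B_def)
  have AB: "B \<le> A" unfolding A_def B_def using Q B B_def real_le_rsqrt by auto
  have A: "0 < A" using AB B by simp
  have QA: "Q = A^2" using Q B unfolding A_def B_def
    by (metis order.trans real_sqrt_pow2 zero_le_power2)
  define K where "K = L / (r * \<beta>)"
  have K: "0 \<le> K" using L r \<beta> by (simp add: K_def)
  have lnQ: "ln (Q / (r * G0)^2) = 2 * ln (A / B)"
    using A B by (simp add: QA B_def[symmetric] ln_div ln_mult power2_eq_square)
  have h2: "(A^2 - B^2) / A \<le> 2 * r * \<beta> * \<Delta> + r * \<beta> * E + 4 * K * ln (A / B)"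
  proof -
    have "(A^2 - B^2) / A = 2 * r * \<beta> * ((Q - (r * G0)^2) / (2 * r * \<beta> * sqrt Q))"
      using A r \<beta> by (simp add: QA B_def A_def[symmetric] field_simps power_mult_distrib)
    also have "\<dots> \<le> 2 * r * \<beta> * (\<Delta> + E / 2 + L / (r^2 * \<beta>^2) * ln (Q / (r * G0)^2))"
      using hyp r \<beta> by (intro mult_left_mono) auto
    also have "\<dots> = 2 * r * \<beta> * \<Delta> + r * \<beta> * E + 4 * K * ln (A / B)"
      using r \<beta> unfolding lnQ by (simp add: K_def field_simps power2_eq_square)
    finally show ?thesis .
  qed
  have h3: "A - B \<le> (A^2 - B^2) / A"
  proof -
    have "B^2 / A \<le> B" using AB A B by (simp add: power2_eq_square field_simps mult_left_mono)
    thus ?thesis using A by (simp add: diff_divide_distrib power2_eq_square)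
  qed
  define a where "a = L / (\<beta> * G0)"
  have a: "0 \<le> a" using L \<beta> G by (simp add: a_def)
  have LB: "L / \<beta> = a * G0" using G by (simp add: a_def)
  have Kle: "K \<le> L / \<beta>"
  proof -
    have "L / (r * \<beta>) \<le> L / (1 * \<beta>)" using r \<beta> L by (intro divide_left_mono) auto
    thus ?thesis by (simp add: K_def)
  qed
  have h4: "4 * K * ln (A / B) \<le> A / 2 + 4 * (L / \<beta>) * (7 + ln (1 + a))"
  proof (cases "L = 0")
    case True
    then show ?thesis using A by (simp add: K_def)
  next
    case False
    then have Kp: "0 < K" using L r \<beta> by (simp add: K_def)
    have s: "ln (A / B) = ln (A / (8 * K)) + ln (8 * K / B)"
      using A B Kp by (simp add: ln_div)
    have 1: "4 * K * ln (A / (8 * K)) \<le> A / 2"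
    proof -
      have "ln (A / (8 * K)) \<le> A / (8 * K)" using A Kp ln_le_minus_one[of "A / (8*K)"] by simp
      hence "4 * K * ln (A / (8 * K)) \<le> 4 * K * (A / (8 * K))" using Kp by (intro mult_left_mono) auto
      also have "4 * K * (A / (8 * K)) = A / 2" using Kp by (simp add: field_simps)
      finally show ?thesis .
    qed
    have 8: "8 * K / B \<le> 8 * a"
    proof -
      have "8 * K / B = 8 * a / r^2" using r \<beta> G
        by (simp add: K_def B_def a_def field_simps power2_eq_square)
      also have "\<dots> \<le> 8 * a / 1" using r a
        by (intro divide_left_mono) (auto simp: power_one_over one_le_power)
      finally show ?thesis by simp
    qed
    have ap: "0 < a" using False L \<beta> G by (simp add: a_def)
    have "ln (8 * K / B) \<le> ln (8 * a)" using 8 Kp B by (intro ln_mono) auto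
    also have "\<dots> = ln 8 + ln a" using ap by (simp add: ln_mult)
    also have "\<dots> \<le> 7 + ln (1 + a)"
    proof -
      have "ln a \<le> ln (1 + a)" using ap by (intro ln_mono) auto
      thus ?thesis using ln8 by linarith
    qed
    finally have 2: "ln (8 * K / B) \<le> 7 + ln (1 + a)" .
    have "4 * K * ln (8 * K / B) \<le> 4 * K * (7 + ln (1 + a))" using 2 Kp by simp
    also have "\<dots> \<le> 4 * (L / \<beta>) * (7 + ln (1 + a))"
      using Kle a by (intro mult_right_mono) auto
    finally show ?thesis using s 1 by (simp add: distrib_left)
  qed
  have h5: "7 * (L / \<beta>) \<le> 7 * G0 + 14 * (L / \<beta>) * ln (1 + a)"
  proof (cases "a \<le> 1")
    case True
    then have "L / \<beta> \<le> G0" using LB G a by (simp add: mult_left_le_one_le)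
    moreover have "0 \<le> (L / \<beta>) * ln (1 + a)" using L \<beta> a by simp
    ultimately show ?thesis by simp
  next
    case False
    then have "ln 2 \<le> ln (1 + a)" by simp
    hence "1/2 \<le> ln (1 + a)" using ln_half by linarith
    hence "(L / \<beta>) * (1/2) \<le> (L / \<beta>) * ln (1 + a)" using L \<beta> by (intro mult_left_mono) auto
    thus ?thesis using G by simp
  qed
  have "A \<le> 2 * B + 4 * r * \<beta> * \<Delta> + 2 * r * \<beta> * E + 8 * (L / \<beta>) * (7 + ln (1 + a))"
    using h2 h3 h4 by simp
  also have "\<dots> \<le> 2 * B + 4 * r * \<beta> * \<Delta> + 2 * r * \<beta> * E + 56 * G0 + 120 * (L / \<beta> * ln (1 + a))"
    using h5 by (simp add: distrib_left)
  also have "\<dots> \<le> 120 * r * (\<Delta> * \<beta> + G0 + L / \<beta> * ln (1 + a) + \<beta> * E)"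
  proof -
    define lv where "lv = L / \<beta> * ln (1 + a)"
    have l: "0 \<le> lv" using L \<beta> a by (simp add: lv_def)
    have e: "120 * r * (\<Delta> * \<beta> + G0 + lv + \<beta> * E) = 120 * (r * \<beta> * \<Delta>) + 120 * (r * G0) + 120 * (r * lv) + 120 * (r * \<beta> * E)"
      by (simp add: algebra_simps)
    have "G0 \<le> r * G0" using mult_right_mono[of 1 r G0] r G by simp
    moreover have "lv \<le> r * lv" using mult_right_mono[of 1 r lv] r l by simp
    moreover have "0 \<le> r * \<beta> * \<Delta>" "0 \<le> r * \<beta> * E" "0 \<le> r * G0" using r \<beta> \<Delta> E G by simp_all
    moreover have "B = r * G0" by (simp add: B_def)
    ultimately show ?thesis unfolding lv_def[symmetric] e by linarith
  qed
  finally show ?thesis by (simp add: A_def a_def)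
qed



lemma r_sq: "(real n powr (1/4))^2 = sqrt (real n)"
proof -
  have "(real n powr (1/4))^2 = real n powr (1/4 + 1/4)"
    by (simp add: power2_eq_square powr_add[symmetric])
  also have "\<dots> = sqrt (real n)" by (simp add: powr_half_sqrt)
  finally show ?thesis .
qed

lemma pointwise:
  assumes n: "n \<ge> 1" and T: "T \<ge> 1" and L: "0 \<le> L" and \<beta>: "\<beta>0 > 0" and G: "G0 > 0" and x0: "x0 \<in> Rd d"
    and gr: "\<forall>i<n. has_gradient_on_Rd d (f i) (g i)"
    and lip: "\<forall>i<n. \<forall>x\<in>Rd d. \<forall>y\<in>Rd d. norm_d d (vsub (g i x) (g i y)) \<le> L * norm_d d (vsub x y)"
    and bdd: "bdd_below (avg_fun n f ` Rd d)"
    and \<omega>: "\<forall>t<T. \<omega> t < n"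
  shows "(\<Sum>t<T. norm_d d (sp_grad d n g x0 \<beta>0 G0 \<omega> t))
     \<le> 120 * ((avg_fun n f x0 - (INF x\<in>Rd d. avg_fun n f x)) * \<beta>0 + G0
            + L / \<beta>0 * ln (1 + real n * real T * (L / (\<beta>0 * G0) + norm_d d (full_grad n g x0) / G0))
            + \<beta>0 * (\<Sum>t<T. sp_gamma d n g x0 \<beta>0 G0 \<omega> t *
                    (norm_d d (vsub (full_grad n g (sp_x d n g x0 \<beta>0 G0 \<omega> t)) (sp_grad d n g x0 \<beta>0 G0 \<omega> t)))^2))
        * real n powr (1/4) * sqrt (real T)"
proof -
  define X where "X = sp_x d n g x0 \<beta>0 G0 \<omega>"
  define V where "V = sp_grad d n g x0 \<beta>0 G0 \<omega>"
  define \<Gamma> where "\<Gamma> = sp_gamma d n g x0 \<beta>0 G0 \<omega>"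
  define F where "F = avg_fun n f"
  define a where "a t = (norm_d d (V t))^2" for t
  define e where "e t = (norm_d d (vsub (full_grad n g (X t)) (V t)))^2" for t
  define r where "r = real n powr (1/4)"
  define c where "c = (r * G0)^2"
  define Q where "Q t = c + (\<Sum>s<Suc t. a s)" for t
  have a0: "0 \<le> a t" for t by (simp add: a_def)
  have e0: "0 \<le> e t" for t by (simp add: e_def)
  have r1: "1 \<le> r" using n by (simp add: r_def ge_one_powr_ge_zero)
  have r2: "r^2 = sqrt (real n)" by (simp add: r_def r_sq)
  have cpos: "0 < c" using r1 G by (simp add: c_def)
  have Qpos: "0 < Q t" for t using cpos a0 by (simp add: Q_def add_pos_nonneg sum_nonneg)
  have \<Gamma>eq: "\<Gamma> t = 1 / (r * \<beta>0 * sqrt (Q t))" for t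
    unfolding \<Gamma>_def sp_gamma_S ada_step_def sp_S_sum Q_def c_def
    by (simp add: r_def[symmetric] a_def V_def power_mult_distrib r2)
  have \<Gamma>0: "0 \<le> \<Gamma> t" for t using r1 \<beta> Qpos[of t] by (simp add: \<Gamma>eq)
  have RdXV: "t < T \<Longrightarrow> X t \<in> Rd d \<and> V t \<in> Rd d" for t
    unfolding X_def V_def by (rule sp_Rd[OF x0 gr]) (use \<omega> in auto)
  have XT: "X T \<in> Rd d"
  proof -
    obtain m where m: "T = Suc m" using T by (cases T) auto
    show ?thesis using RdXV[of m] m by (simp add: X_def V_def \<Gamma>_def sp_Suc(1) Rd_vsub Rd_vscale)
  qed
  have desc: "m \<le> T \<Longrightarrow> F (X m) \<le> F x0 - (\<Sum>t<m. \<Gamma> t / 2 * a t - \<Gamma> t / 2 * e t - L * (\<Gamma> t)^2 * a t)" for m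
  proof (induction m)
    case 0 then show ?case by (simp add: X_def sp_0)
  next
    case (Suc m)
    have xv: "X m \<in> Rd d" "V m \<in> Rd d" using RdXV[of m] Suc.prems by auto
    have "F (X (Suc m)) \<le> F (X m) - \<Gamma> m / 2 * a m + \<Gamma> m / 2 * e m + L * (\<Gamma> m)^2 * a m"
      unfolding F_def a_def e_def
      using step_descent[OF n gr lip L xv \<Gamma>0[of m]]
      by (simp add: X_def V_def \<Gamma>_def sp_Suc(1))
    then show ?case using Suc by simp
  qed
  define \<Delta> where "\<Delta> = F x0 - (INF x\<in>Rd d. F x)"
  have infle: "(INF x\<in>Rd d. F x) \<le> F y" if "y \<in> Rd d" for y
    using bdd that unfolding F_def by (intro cINF_lower) auto
  have \<Delta>0: "0 \<le> \<Delta>" using infle[OF x0] by (simp add: \<Delta>_def)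
  define E where "E = (\<Sum>t<T. \<Gamma> t * e t)"
  have E0: "0 \<le> E" unfolding E_def using \<Gamma>0 e0 by (simp add: sum_nonneg)
  have s1: "(\<Sum>t<T. \<Gamma> t * a t) / 2 \<le> \<Delta> + E / 2 + L * (\<Sum>t<T. (\<Gamma> t)^2 * a t)"
  proof -
    have "F (X T) \<le> F x0 - (\<Sum>t<T. \<Gamma> t / 2 * a t - \<Gamma> t / 2 * e t - L * (\<Gamma> t)^2 * a t)"
      using desc by simp
    moreover have "(INF x\<in>Rd d. F x) \<le> F (X T)" using infle[OF XT] .
    moreover have "(\<Sum>t<T. \<Gamma> t / 2 * a t - \<Gamma> t / 2 * e t - L * (\<Gamma> t)^2 * a t)
        = (\<Sum>t<T. \<Gamma> t * a t) / 2 - E / 2 - L * (\<Sum>t<T. (\<Gamma> t)^2 * a t)"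
      by (simp add: E_def sum_subtractf sum_divide_distrib sum_distrib_left mult.assoc)
    ultimately show ?thesis by (simp add: \<Delta>_def)
  qed
  define Qv where "Qv = c + (\<Sum>s<T. a s)"
  have QleQv: "t < T \<Longrightarrow> Q t \<le> Qv" for t
  proof -
    assume "t < T"
    hence "(\<Sum>s<Suc t. a s) \<le> (\<Sum>s<T. a s)" using a0 by (intro sum_mono2) auto
    thus ?thesis unfolding Q_def Qv_def by simp
  qed
  have s2: "(\<Sum>t<T. (\<Gamma> t)^2 * a t) \<le> ln (Qv / c) / (r^2 * \<beta>0^2)"
  proof -
    have "(\<Sum>t<T. (\<Gamma> t)^2 * a t) = (\<Sum>t<T. a t / Q t) / (r^2 * \<beta>0^2)"
      unfolding sum_divide_distrib
      by (rule sum.cong) (use Qpos in \<open>simp_all add: \<Gamma>eq power_mult_distrib power_divide less_imp_le\<close>)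
    also have "\<dots> \<le> ln (Qv / c) / (r^2 * \<beta>0^2)"
      using log_sum[of a c T, OF a0 cpos] r1 \<beta>
      by (intro divide_right_mono) (simp_all add: Q_def Qv_def)
    finally show ?thesis .
  qed
  have s3: "(Qv - c) / (r * \<beta>0 * sqrt Qv) \<le> (\<Sum>t<T. \<Gamma> t * a t)"
  proof -
    have "(Qv - c) / (r * \<beta>0 * sqrt Qv) = (\<Sum>t<T. 1 / (r * \<beta>0 * sqrt Qv) * a t)"
      by (simp add: Qv_def sum_divide_distrib)
    also have "\<dots> \<le> (\<Sum>t<T. \<Gamma> t * a t)"
    proof (rule sum_mono)
      fix t assume "t \<in> {..<T}"
      then have "Q t \<le> Qv" using QleQv by simp
      then have "1 / (r * \<beta>0 * sqrt Qv) \<le> \<Gamma> t"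
        unfolding \<Gamma>eq using Qpos[of t] r1 \<beta>
        by (intro divide_left_mono mult_left_mono mult_pos_pos) auto
      then show "1 / (r * \<beta>0 * sqrt Qv) * a t \<le> \<Gamma> t * a t" using a0 by (intro mult_right_mono) auto
    qed
    finally show ?thesis .
  qed
  have hyp: "(Qv - (r * G0)^2) / (2 * r * \<beta>0 * sqrt Qv) \<le> \<Delta> + E / 2 + L / (r^2 * \<beta>0^2) * ln (Qv / (r * G0)^2)"
  proof -
    have "(Qv - c) / (2 * r * \<beta>0 * sqrt Qv) = (Qv - c) / (r * \<beta>0 * sqrt Qv) / 2" by simp
    also have "\<dots> \<le> (\<Sum>t<T. \<Gamma> t * a t) / 2" by (rule divide_right_mono[OF s3]) simp
    also have "\<dots> \<le> \<Delta> + E / 2 + L * (\<Sum>t<T. (\<Gamma> t)^2 * a t)" using s1 by simp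
    also have "\<dots> \<le> \<Delta> + E / 2 + L * (ln (Qv / c) / (r^2 * \<beta>0^2))" using mult_left_mono[OF s2 L] by simp
    finally show ?thesis by (simp add: c_def)
  qed
  have Qvc: "(r * G0)^2 \<le> Qv" using a0 by (simp add: Qv_def c_def sum_nonneg)
  have main: "sqrt Qv \<le> 120 * r * (\<Delta> * \<beta>0 + G0 + L / \<beta>0 * ln (1 + L / (\<beta>0 * G0)) + \<beta>0 * E)"
    by (rule final_real[OF r1 \<beta> G L \<Delta>0 E0 Qvc hyp])
  define u where "u = norm_d d (full_grad n g x0) / G0"
  have u0: "0 \<le> u" using G by (simp add: u_def norm_nonneg)
  have lnle: "ln (1 + L / (\<beta>0 * G0)) \<le> ln (1 + real n * real T * (L / (\<beta>0 * G0) + u))"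
  proof -
    have aa: "0 \<le> L / (\<beta>0 * G0)" using L \<beta> G by simp
    have nT: "1 \<le> real n * real T" using mult_mono[of 1 "real n" 1 "real T"] n T by simp
    have "L / (\<beta>0 * G0) \<le> 1 * (L / (\<beta>0 * G0) + u)" using u0 by simp
    also have "\<dots> \<le> real n * real T * (L / (\<beta>0 * G0) + u)"
      using nT aa u0 by (intro mult_right_mono) auto
    finally show ?thesis using aa by (intro ln_mono) auto
  qed
  have main2: "sqrt Qv \<le> 120 * r * (\<Delta> * \<beta>0 + G0 + L / \<beta>0 * ln (1 + real n * real T * (L / (\<beta>0 * G0) + u)) + \<beta>0 * E)"
  proof -
    have "L / \<beta>0 * ln (1 + L / (\<beta>0 * G0)) \<le> L / \<beta>0 * ln (1 + real n * real T * (L / (\<beta>0 * G0) + u))"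
      using lnle L \<beta> by (intro mult_left_mono) auto
    hence "120 * r * (\<Delta> * \<beta>0 + G0 + L / \<beta>0 * ln (1 + L / (\<beta>0 * G0)) + \<beta>0 * E)
        \<le> 120 * r * (\<Delta> * \<beta>0 + G0 + L / \<beta>0 * ln (1 + real n * real T * (L / (\<beta>0 * G0) + u)) + \<beta>0 * E)"
      using r1 by (intro mult_left_mono) auto
    thus ?thesis using main by linarith
  qed
  have "(\<Sum>t<T. norm_d d (V t)) \<le> sqrt (real T) * sqrt (\<Sum>t<T. (norm_d d (V t))^2)"
    by (rule sum_le_sqrt)
  moreover have "sqrt (\<Sum>t<T. (norm_d d (V t))^2) \<le> sqrt Qv"
    using cpos by (simp add: Qv_def a_def)
  ultimately have "(\<Sum>t<T. norm_d d (V t)) \<le> sqrt (real T) * sqrt Qv"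
    by (meson mult_left_mono order_trans real_sqrt_ge_zero of_nat_0_le_iff)
  also have "\<dots> \<le> sqrt (real T) * (120 * r * (\<Delta> * \<beta>0 + G0 + L / \<beta>0 * ln (1 + real n * real T * (L / (\<beta>0 * G0) + u)) + \<beta>0 * E))"
    using main2 by (intro mult_left_mono) auto
  finally show ?thesis
    by (simp add: X_def V_def \<Gamma>_def F_def \<Delta>_def E_def e_def u_def r_def algebra_simps)
qed



theorem lemma4:
  "\<exists>C>0. \<forall>(d::nat) (n::nat) (f :: nat \<Rightarrow> (nat \<Rightarrow> real) \<Rightarrow> real)
       (g :: nat \<Rightarrow> (nat \<Rightarrow> real) \<Rightarrow> (nat \<Rightarrow> real)) (L::real) (x0 :: nat \<Rightarrow> real)
       (\<beta>0::real) (G0::real) (T::nat).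
     n \<ge> 1 \<and> T \<ge> 1 \<and> 0 \<le> L \<and> \<beta>0 > 0 \<and> G0 > 0 \<and> x0 \<in> Rd d
     \<and> (\<forall>i<n. has_gradient_on_Rd d (f i) (g i))
     \<and> (\<forall>i<n. \<forall>x\<in>Rd d. \<forall>y\<in>Rd d. norm_d d (vsub (g i x) (g i y)) \<le> L * norm_d d (vsub x y))
     \<and> bdd_below (avg_fun n f ` Rd d)
     \<longrightarrow>
     measure_pmf.expectation (idx_pmf n T)
        (\<lambda>\<omega>. \<Sum>t<T. norm_d d (sp_grad d n g x0 \<beta>0 G0 \<omega> t))
     \<le> C * ((avg_fun n f x0 - (INF x\<in>Rd d. avg_fun n f x)) * \<beta>0 + G0
            + L / \<beta>0 * ln (1 + real n * real T * (L / (\<beta>0 * G0) + norm_d d (full_grad n g x0) / G0))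
            + \<beta>0 * measure_pmf.expectation (idx_pmf n T)
                (\<lambda>\<omega>. \<Sum>t<T. sp_gamma d n g x0 \<beta>0 G0 \<omega> t *
                    (norm_d d (vsub (full_grad n g (sp_x d n g x0 \<beta>0 G0 \<omega> t)) (sp_grad d n g x0 \<beta>0 G0 \<omega> t)))^2))
        * real n powr (1/4) * sqrt (real T)"
proof (intro exI[of _ 120] conjI allI impI)
  fix d n :: nat and f :: "nat \<Rightarrow> (nat \<Rightarrow> real) \<Rightarrow> real"
    and g :: "nat \<Rightarrow> (nat \<Rightarrow> real) \<Rightarrow> (nat \<Rightarrow> real)" and L :: real and x0 :: "nat \<Rightarrow> real"
    and \<beta>0 G0 :: real and T :: nat
  assume H: "n \<ge> 1 \<and> T \<ge> 1 \<and> 0 \<le> L \<and> \<beta>0 > 0 \<and> G0 > 0 \<and> x0 \<in> Rd d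
     \<and> (\<forall>i<n. has_gradient_on_Rd d (f i) (g i))
     \<and> (\<forall>i<n. \<forall>x\<in>Rd d. \<forall>y\<in>Rd d. norm_d d (vsub (g i x) (g i y)) \<le> L * norm_d d (vsub x y))
     \<and> bdd_below (avg_fun n f ` Rd d)"
  from H have h1: "n \<ge> 1" and h2: "T \<ge> 1" and h3: "0 \<le> L" and h4: "\<beta>0 > 0" and h5: "G0 > 0"
    and h6: "x0 \<in> Rd d" and h7: "\<forall>i<n. has_gradient_on_Rd d (f i) (g i)"
    and h8: "\<forall>i<n. \<forall>x\<in>Rd d. \<forall>y\<in>Rd d. norm_d d (vsub (g i x) (g i y)) \<le> L * norm_d d (vsub x y)"
    and h9: "bdd_below (avg_fun n f ` Rd d)" by auto
  define p where "p = idx_pmf n T"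
  define K0 where "K0 = (avg_fun n f x0 - (INF x\<in>Rd d. avg_fun n f x)) * \<beta>0 + G0
            + L / \<beta>0 * ln (1 + real n * real T * (L / (\<beta>0 * G0) + norm_d d (full_grad n g x0) / G0))"
  define Y where "Y \<omega> = (\<Sum>t<T. norm_d d (sp_grad d n g x0 \<beta>0 G0 \<omega> t))" for \<omega>
  define Z where "Z \<omega> = (\<Sum>t<T. sp_gamma d n g x0 \<beta>0 G0 \<omega> t *
                    (norm_d d (vsub (full_grad n g (sp_x d n g x0 \<beta>0 G0 \<omega> t)) (sp_grad d n g x0 \<beta>0 G0 \<omega> t)))^2)" for \<omega>
  define k where "k = 120 * real n powr (1/4) * sqrt (real T)"
  have fin: "finite (PiE {..<T} (\<lambda>_. {..<n::nat}))" by (simp add: finite_PiE)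
  have ne: "PiE {..<T} (\<lambda>_. {..<n::nat}) \<noteq> {}" proof -
    have "0 \<in> {..<n}" using h1 by simp
    hence "{..<n} \<noteq> {}" by blast
    thus ?thesis by (simp add: PiE_eq_empty_iff)
  qed
  have sp: "set_pmf p = PiE {..<T} (\<lambda>_. {..<n})" unfolding p_def idx_pmf_def
    using fin ne by simp
  have int: "integrable (measure_pmf p) h" for h :: "_ \<Rightarrow> real"
    by (rule integrable_measure_pmf_finite) (simp add: sp fin)
  have pw: "Y \<omega> \<le> k * K0 + (k * \<beta>0) * Z \<omega>" if "\<omega> \<in> set_pmf p" for \<omega>
  proof -
    have om: "\<forall>t<T. \<omega> t < n" using that by (auto simp: sp PiE_def Pi_def)
    have "Y \<omega> \<le> 120 * (K0 + \<beta>0 * Z \<omega>) * real n powr (1/4) * sqrt (real T)"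
      unfolding Y_def Z_def K0_def by (rule pointwise[OF h1 h2 h3 h4 h5 h6 h7 h8 h9 om])
    thus ?thesis by (simp add: k_def algebra_simps)
  qed
  have "measure_pmf.expectation p Y \<le> measure_pmf.expectation p (\<lambda>\<omega>. k * K0 + (k * \<beta>0) * Z \<omega>)"
    by (rule integral_mono_AE) (use int pw in \<open>auto intro!: AE_pmfI\<close>)
  also have "\<dots> = k * K0 + (k * \<beta>0) * measure_pmf.expectation p Z"
    using int by (simp add: measure_pmf.prob_space)
  finally show "measure_pmf.expectation p Y \<le> 120 * (K0 + \<beta>0 * measure_pmf.expectation p Z) * real n powr (1/4) * sqrt (real T)"
    by (simp add: k_def algebra_simps)
qed simp

end
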